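(* Let $\mathcal{H}=(Q_0,Q_1,\beta)$ be a directed tensor-labeled hypergraph over $\mathbb{R}$. Then the edge Gram operator $L_\beta=\partial_\beta^*\partial_\beta$ on $\mathbb{R}^{Q_1}$ satisfies $$\mathrm{rank}(L_\beta)=|Q_1|-\dim_{\mathbb{R}}\mathcal{Z}(\mathcal{H})=|V_{\mathrm{macro}}|-c_{\mathrm{macro}}-\delta(\mathcal{H}),$$ and this number equals the sum of the multiplicities of the nonzero eigenvalues of $L_\beta$.
   Context: $T(\mathbb{R}^{Q_0})=\bigoplus_{k\ge0}(\mathbb{R}^{Q_0})^{\otimes k}$, equipped with the inner product making the standard basis ($1$ and all $u_1\otimes\cdots\otimes u_k$, $u_i\in Q_0$, identifying $v$ with $\mathbf{1}_v$) orthonormal; $\mathbb{R}^{Q_1}$ has the standard inner product. A directed tensor-labeled hypergraph is $\mathcal{H}=(Q_0,Q_1,\beta)$ ($Q_0,Q_1$ finite) with $\beta:\mathbb{R}^{Q_1}\to T\times T$ linear, $\beta(\mathbf{1}_e)=(A_e,B_e)$. $\partial_\beta:\mathbb{R}^{Q_1}\to T(\mathbb{R}^{Q_0})$, $\mathbf{1}_e\mapsto B_e-A_e$; $\partial_\beta^*$ its adjoint; $\mathcal{Z}(\mathcal{H})=\mathrm{Ker}\,\partial_\beta$. $V_{\mathrm{macro}}=\{A_e\}\cup\{B_e\}$; the macrograph is the directed multigraph on $V_{\mathrm{macro}}$ with edges $Q_1$, $e:A_e\to B_e$; $c_{\mathrm{macro}}$ its number of weakly connected components; $B_{\mathrm{macro}}:\mathbf{1}_e\mapsto\mathbf{1}_{B_e}-\mathbf{1}_{A_e}$;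 $\hat\phi:\mathbb{R}^{V_{\mathrm{macro}}}\to T(\mathbb{R}^{Q_0})$, $\mathbf{1}_w\mapsto w$; $\delta(\mathcal{H})=\dim_{\mathbb{R}}(\mathrm{Im}B_{\mathrm{macro}}\cap\mathrm{Ker}\hat\phi)$. *)

theory Defs
  imports "HOL-Analysis.Analysis" "HOL-Library.Function_Algebras"
    "HOL-Computational_Algebra.Polynomial"
begin

text \<open>Tensor algebra T(R^Q0): real-valued functions on words (lists) over Q0,
  with finite support; the word [] is the unit 1, the word [u1,...,uk] is
  u1 (x) ... (x) uk.\<close>
type_synonym 'v tens = "'v list \<Rightarrow> real"

definition fin_supp :: "('a \<Rightarrow> real) \<Rightarrow> bool" where
  "fin_supp t \<longleftrightarrow> finite {w. t w \<noteq> 0}"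

definition tinner :: "'v tens \<Rightarrow> 'v tens \<Rightarrow> real" where
  "tinner s t = (\<Sum>w\<in>{w. s w \<noteq> 0}. s w * t w)"

definition bdry :: "('e::finite \<Rightarrow> 'v tens) \<Rightarrow> ('e \<Rightarrow> 'v tens) \<Rightarrow> real^'e \<Rightarrow> 'v tens" where
  "bdry A B x = (\<lambda>w. \<Sum>e\<in>UNIV. x $ e * (B e w - A e w))"

definition cycles :: "('e::finite \<Rightarrow> 'v tens) \<Rightarrow> ('e \<Rightarrow> 'v tens) \<Rightarrow> (real^'e) set" where
  "cycles A B = {x. bdry A B x = 0}"

text \<open>Edge Gram operator L = d* d, as its matrix in the standard basis of R^Q1:
  L_{ef} = < d 1_e, d 1_f >.\<close>
definition gramL :: "('e::finite \<Rightarrow> 'v tens) \<Rightarrow> ('e \<Rightarrow> 'v tens) \<Rightarrow> real^'e^'e" where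
  "gramL A B = (\<chi> e f. tinner (B e - A e) (B f - A f))"

definition Vmacro :: "('e \<Rightarrow> 'v tens) \<Rightarrow> ('e \<Rightarrow> 'v tens) \<Rightarrow> 'v tens set" where
  "Vmacro A B = range A \<union> range B"

text \<open>Edges of the macrograph e : A_e -> B_e; weak connectivity = reflexive-transitive
  closure of the symmetrised edge relation.\<close>
definition macro_edges :: "('e \<Rightarrow> 'v tens) \<Rightarrow> ('e \<Rightarrow> 'v tens) \<Rightarrow> ('v tens \<times> 'v tens) set" where
  "macro_edges A B = {(A e, B e) | e. True}"

definition c_macro :: "('e \<Rightarrow> 'v tens) \<Rightarrow> ('e \<Rightarrow> 'v tens) \<Rightarrow> nat" where
  "c_macro A B = card (Vmacro A B // ((macro_edges A B \<union> (macro_edges A B)\<inverse>)\<^sup>*))"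

text \<open>R^{V_macro}: real functions on T supported in V_macro.\<close>
definition Bmacro :: "('e::finite \<Rightarrow> 'v tens) \<Rightarrow> ('e \<Rightarrow> 'v tens) \<Rightarrow> real^'e \<Rightarrow> ('v tens \<Rightarrow> real)" where
  "Bmacro A B x = (\<lambda>u. \<Sum>e\<in>UNIV. x $ e * ((if u = B e then 1 else 0) - (if u = A e then 1 else 0)))"

definition phihat :: "('e \<Rightarrow> 'v tens) \<Rightarrow> ('e \<Rightarrow> 'v tens) \<Rightarrow> ('v tens \<Rightarrow> real) \<Rightarrow> 'v tens" where
  "phihat A B y = (\<lambda>w. \<Sum>u\<in>Vmacro A B. y u * u w)"

definition ker_phihat :: "('e \<Rightarrow> 'v tens) \<Rightarrow> ('e \<Rightarrow> 'v tens) \<Rightarrow> ('v tens \<Rightarrow> real) set" where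
  "ker_phihat A B = {y. (\<forall>u. u \<notin> Vmacro A B \<longrightarrow> y u = 0) \<and> phihat A B y = 0}"

definition fscale :: "real \<Rightarrow> ('a \<Rightarrow> real) \<Rightarrow> ('a \<Rightarrow> real)" where
  "fscale c f = (\<lambda>x. c * f x)"

definition delta :: "('e::finite \<Rightarrow> 'v tens) \<Rightarrow> ('e \<Rightarrow> 'v tens) \<Rightarrow> nat" where
  "delta A B = vector_space.dim fscale (range (Bmacro A B) \<inter> ker_phihat A B)"

definition charpoly :: "real^'n^'n \<Rightarrow> real poly" where
  "charpoly M = det (\<chi> i j. (if i = j then [:0, 1:] else 0) - [:M $ i $ j:])"

definition eigenvalues :: "real^'n^'n \<Rightarrow> real set" where
  "eigenvalues M = {l. \<exists>v. v \<noteq> 0 \<and> M *v v = l *\<^sub>R v}"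

end

theory Submission
  imports Defs
begin

lemma sym_dot:
  fixes M :: "real^'n^'n"
  assumes "transpose M = M"
  shows "(M *v x) \<bullet> y = x \<bullet> (M *v y)"
  proof -
  have "M *v x = x v* M" using vector_transpose_matrix[of x M] assms by simp
  then show ?thesis by (simp add: dot_lmul_matrix)
qed

lemma mv_add: "(M::real^'n^'m) *v (x + y) = M *v x + M *v y"
  by (simp add: matrix_vector_right_distrib)
lemma mv_scale: "(M::real^'n^'m) *v (c *\<^sub>R x) = c *\<^sub>R (M *v x)"
  by (simp add: matrix_vector_mult_scaleR)
lemma mv_diff: "(M::real^'n^'m) *v (x - y) = M *v x - M *v y"
  by (simp add: matrix_vector_mult_diff_distrib)

lemma eig_exists:
  fixes M :: "real^'n^'n"
  assumes sym: "transpose M = M" and S: "subspace S" "S \<noteq> {0}"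
    and inv: "\<And>x. x \<in> S \<Longrightarrow> M *v x \<in> S"
  shows "\<exists>x\<in>S. norm x = 1 \<and> (\<exists>c. M *v x = c *\<^sub>R x)"
proof -
  define K where "K = S \<inter> sphere 0 1"
  define q where "q = (\<lambda>y::real^'n. y \<bullet> (M *v y))"
  have cK: "compact K" unfolding K_def
    using S(1) closed_subspace compact_sphere by (intro closed_Int_compact) auto
  have neK: "K \<noteq> {}"
  proof -
    obtain y where y: "y \<in> S" "y \<noteq> 0" using S subspace_0 by blast
    then have "(1 / norm y) *\<^sub>R y \<in> K" unfolding K_def
      using S(1) by (simp add: subspace_scale)
    then show ?thesis by blast
  qed
  have coK: "continuous_on K q" unfolding q_def
    by (intro continuous_intros linear_continuous_on matrix_vector_mul_bounded_linear)
  obtain x where xK: "x \<in> K" and xmax0: "\<forall>y\<in>K. q y \<le> q x"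
    using continuous_attains_sup[OF cK neK coK] by blast
  have xmax: "\<And>y. y \<in> K \<Longrightarrow> q y \<le> q x" using xmax0 by blast
  define l where "l = q x"
  have xS: "x \<in> S" and nx: "norm x = 1" using xK by (auto simp: K_def)
  have xx: "x \<bullet> x = 1" using nx by (simp add: norm_eq_1)
  have bound: "q w \<le> l * (w \<bullet> w)" if "w \<in> S" for w
  proof (cases "w = 0")
    case True then show ?thesis by (simp add: q_def)
  next
    case False
    let ?u = "(1 / norm w) *\<^sub>R w"
    have "?u \<in> K" using that False S(1) by (simp add: K_def subspace_scale)
    then have "q ?u \<le> l" using xmax l_def by blast
    moreover have "q ?u = q w / (norm w)^2"
      by (simp add: q_def mv_scale power2_eq_square)
    moreover have "w \<bullet> w = (norm w)^2" by (simp add: power2_norm_eq_inner)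
    ultimately show ?thesis using False by (simp add: field_simps)
  qed
  define z where "z = M *v x - l *\<^sub>R x"
  have zS: "z \<in> S" unfolding z_def using S(1) xS inv by (simp add: subspace_diff subspace_scale)
  have xz: "x \<bullet> z = 0" unfolding z_def using xx by (simp add: inner_diff_right l_def q_def)
  have zMx: "z \<bullet> (M *v x) = z \<bullet> z"
  proof -
    have "M *v x = z + l *\<^sub>R x" by (simp add: z_def)
    then show ?thesis using xz by (simp add: inner_add_right inner_commute)
  qed
  define a where "a = z \<bullet> z"
  define b where "b = q z - l * a"
  have ineq: "2 * t * a + t^2 * b \<le> 0" for t
  proof -
    have "x + t *\<^sub>R z \<in> S" using S(1) xS zS by (simp add: subspace_add subspace_scale)
    from bound[OF this] have f1: "q (x + t *\<^sub>R z) \<le> l * ((x + t *\<^sub>R z) \<bullet> (x + t *\<^sub>R z))" .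
    have f2: "q (x + t *\<^sub>R z) = l + 2 * t * a + t^2 * q z"
    proof -
      have "x \<bullet> (M *v z) = z \<bullet> (M *v x)" using sym_dot[OF sym, of z x] by (simp add: inner_commute)
      then show ?thesis unfolding q_def l_def a_def
        using zMx by (simp add: mv_add mv_scale inner_add_left inner_add_right power2_eq_square algebra_simps q_def)
    qed
    have f3: "(x + t *\<^sub>R z) \<bullet> (x + t *\<^sub>R z) = 1 + t^2 * a"
      using xx xz unfolding a_def
      by (simp add: inner_add_left inner_add_right inner_commute power2_eq_square)
    have "l + 2 * t * a + t^2 * q z \<le> l * (1 + t^2 * a)" using f1 unfolding f2 f3 .
    then show ?thesis unfolding b_def by (simp add: algebra_simps)
  qed
  have a0: "a = 0"
  proof (rule ccontr)
    assume "a \<noteq> 0"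
    then have apos: "a > 0" unfolding a_def by simp
    define t where "t = a / (\<bar>b\<bar> + 1)"
    have tpos: "t > 0" using apos by (simp add: t_def)
    have "t * \<bar>b\<bar> < a" unfolding t_def using apos
      by (simp add: field_simps)
    then have "t * t * \<bar>b\<bar> < t * a" using tpos by simp
    moreover have "- (t * t * \<bar>b\<bar>) \<le> t^2 * b" 
    proof -
      have "t*t*(-\<bar>b\<bar>) \<le> t*t*b" by (rule mult_left_mono) auto
      then show ?thesis by (simp add: power2_eq_square)
    qed
    ultimately have "t*t*b > - (t*a)" by (simp add: power2_eq_square)
    moreover have "t*a > 0" using tpos apos by simp
    ultimately have "2 * t * a + t*t * b > 0" by linarith
    then have "2 * t * a + t^2 * b > 0" by (simp add: power2_eq_square)
    with ineq[of t] show False by simp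
  qed
  then have "z = 0" unfolding a_def by simp
  then have "M *v x = l *\<^sub>R x" unfolding z_def by simp
  then show ?thesis using xS nx by blast
qed

lemma spec_sub:
  fixes M :: "real^'n^'n"
  assumes sym: "transpose M = M"
  shows "subspace S \<Longrightarrow> (\<forall>x\<in>S. M *v x \<in> S) \<Longrightarrow> \<exists>B. B \<subseteq> S \<and> pairwise orthogonal B \<and>
     (\<forall>b\<in>B. norm b = 1) \<and> span B = S \<and> (\<forall>b\<in>B. \<exists>c. M *v b = c *\<^sub>R b)"
proof (induction "dim S" arbitrary: S rule: less_induct)
  case less
  show ?case
  proof (cases "S = {0}")
    case True
    then show ?thesis by (intro exI[of _ "{}"]) auto
  next
    case False
    obtain x c where xS: "x \<in> S" and nx: "norm x = 1" and ev: "M *v x = c *\<^sub>R x"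
      using eig_exists[OF sym less.prems(1) False] less.prems(2) by blast
    have xx: "x \<bullet> x = 1" using nx by (simp add: norm_eq_1)
    define S' where "S' = S \<inter> {y. orthogonal x y}"
    have sS': "subspace S'" unfolding S'_def
      by (rule subspace_inter[OF less.prems(1) subspace_orthogonal_to_vector])
    have invS': "\<forall>y\<in>S'. M *v y \<in> S'"
    proof
      fix y assume y: "y \<in> S'"
      then have "M *v y \<in> S" using less.prems(2) by (simp add: S'_def)
      moreover have "x \<bullet> (M *v y) = 0"
      proof -
        have "x \<bullet> (M *v y) = (M *v x) \<bullet> y" using sym_dot[OF sym] by simp
        also have "\<dots> = c * (x \<bullet> y)" by (simp add: ev)
        also have "\<dots> = 0" using y by (simp add: S'_def orthogonal_def)
        finally show ?thesis .
      qed
      ultimately show "M *v y \<in> S'" by (simp add: S'_def orthogonal_def)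
    qed
    have "S' \<subset> S"
    proof
      show "S' \<subseteq> S" by (auto simp: S'_def)
      have "x \<notin> S'" using xx by (simp add: S'_def orthogonal_def)
      then show "S' \<noteq> S" using xS by blast
    qed
    moreover have sp: "span S' = S'" "span S = S" using sS' less.prems(1) by simp_all
    ultimately have "span S' \<subset> span S" by (simp only: sp)
    then have "dim S' < dim S" by (rule dim_psubset)
    from less.hyps[OF this sS' invS'] obtain B' where B': "B' \<subseteq> S'" "pairwise orthogonal B'"
      "\<forall>b\<in>B'. norm b = 1" "span B' = S'" "\<forall>b\<in>B'. \<exists>c. M *v b = c *\<^sub>R b" by blast
    have orthx: "orthogonal x b" "orthogonal b x" if "b \<in> B'" for b
      using that B'(1) by (auto simp: S'_def orthogonal_commute)
    show ?thesis
    proof (intro exI[of _ "insert x B'"] conjI)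
      show "insert x B' \<subseteq> S" using xS B'(1) by (auto simp: S'_def)
      show "pairwise orthogonal (insert x B')"
        using B'(2) orthx by (auto simp: pairwise_insert)
      show "\<forall>b\<in>insert x B'. norm b = 1" using nx B'(3) by auto
      show "\<forall>b\<in>insert x B'. \<exists>c. M *v b = c *\<^sub>R b" using ev B'(5) by auto
      show "span (insert x B') = S"
      proof
        show "span (insert x B') \<subseteq> S"
          using \<open>insert x B' \<subseteq> S\<close> less.prems(1) by (metis span_eq_iff span_mono)
        show "S \<subseteq> span (insert x B')"
        proof
          fix y assume y: "y \<in> S"
          define y' where "y' = y - (x \<bullet> y) *\<^sub>R x"
          have "y' \<in> S'" unfolding S'_def y'_def orthogonal_def
            using y xS less.prems(1) xx by (simp add: subspace_diff subspace_scale inner_diff_right)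
          then have "y' \<in> span (insert x B')" using B'(4) span_mono[of B' "insert x B'"] by auto
          moreover have "(x \<bullet> y) *\<^sub>R x \<in> span (insert x B')" by (simp add: span_base span_scale)
          ultimately have "y' + (x \<bullet> y) *\<^sub>R x \<in> span (insert x B')" by (rule span_add)
          then show "y \<in> span (insert x B')" by (simp add: y'_def)
        qed
      qed
    qed
  qed
qed

lemma spectral:
  fixes M :: "real^'n^'n"
  assumes sym: "transpose M = M"
  obtains B where "pairwise orthogonal B" "\<forall>b\<in>B. norm b = 1" "span B = UNIV"
    "independent B" "finite B" "card B = CARD('n)" "\<forall>b\<in>B. \<exists>c. M *v b = c *\<^sub>R b"
proof -
  obtain B where B: "pairwise orthogonal B" "\<forall>b\<in>B. norm b = 1" "span B = UNIV"
     "\<forall>b\<in>B. \<exists>c. M *v b = c *\<^sub>R b"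
    using spec_sub[OF sym, of UNIV] by auto
  have ind: "independent B" using B(1,2) by (intro pairwise_orthogonal_independent) auto
  have "card B = dim B" using dim_eq_card_independent[OF ind] by simp
  also have "\<dots> = dim (UNIV :: (real^'n) set)" using B(3) dim_span[of B] by simp
  also have "\<dots> = CARD('n)" by simp
  finally have "card B = CARD('n)" .
  moreover have "finite B" using ind by (rule finiteI_independent)
  ultimately show ?thesis using that B ind by blast
qed


definition mp :: "real^'n^'m \<Rightarrow> real poly^'n^'m" where "mp A = (\<chi> i j. [:A$i$j:])"

lemma const_add: "[:a+b:] = [:a:]+[:b:]" for a b :: real
  by (metis add_pCons add_0)

lemma const_sum: "[:sum f S:] = (\<Sum>x\<in>S. [:f x:])" for f :: "_ \<Rightarrow> real"
  by (induction S rule: infinite_finite_induct) (simp_all add: const_add)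

lemma const_mult: "[:a*b:] = [:a:]*[:b:]" for a b :: real
  by simp

lemma mp_mult: "mp (A ** B) = mp A ** mp B"
  unfolding vec_eq_iff by (simp only: mp_def matrix_matrix_mult_def vec_lambda_beta const_sum const_mult) simp

lemma mp_transpose: "mp (transpose A) = transpose (mp A)"
  by (simp add: mp_def transpose_def vec_eq_iff)

lemma mp_one: "mp (mat 1) = mat 1"
  by (simp add: mp_def mat_def vec_eq_iff one_pCons)

lemma mat_diff_ldistrib: "(A::'a::ring_1^'n^'m) ** (B - C) = A ** B - A ** C"
  by (simp add: matrix_matrix_mult_def vec_eq_iff sum_subtractf algebra_simps)

lemma mat_diff_rdistrib: "((B::'a::ring_1^'n^'m) - C) ** A = B ** A - C ** A"
  by (simp add: matrix_matrix_mult_def vec_eq_iff sum_subtractf algebra_simps)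

lemma mat_comm: "mat k ** (A::'a::comm_semiring_1^'n^'n) = A ** mat k"
  by (simp add: matrix_matrix_mult_def mat_def vec_eq_iff if_distrib if_distribR mult.commute cong: if_cong)

lemma charpoly_alt: "charpoly M = det (mat [:0,1:] - mp M)"
  unfolding charpoly_def by (rule arg_cong[where f=det]) (simp add: mp_def mat_def vec_eq_iff)

lemma order_lin: "order l [:-c, 1:] = (if l = c then 1 else 0)"
proof (cases "l = c")
  case True then show ?thesis using order_power_n_n[of c 1] by simp
next
  case False then show ?thesis by (simp add: order_0I)
qed

lemma order_prod_lin: "finite S \<Longrightarrow> order l (\<Prod>i\<in>S. [:-c i, 1:]) = (\<Sum>i\<in>S. if l = c i then 1 else 0)"
proof (induction S rule: finite_induct)
  case empty then show ?case by (simp add: order_0I)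
next
  case (insert x F)
  have nz: "(\<Prod>i\<in>F. [:-c i, 1:]) \<noteq> 0" using insert.hyps(1) by (simp add: prod_zero_iff)
  have "[:-c x, 1:] * (\<Prod>i\<in>F. [:-c i, 1:]) \<noteq> 0" using nz by (intro no_zero_divisors) simp_all
  then have "order l ([:-c x, 1:] * (\<Prod>i\<in>F. [:-c i, 1:])) = order l [:-c x, 1:] + order l (\<Prod>i\<in>F. [:-c i, 1:])"
    by (rule order_mult)
  then show ?case by (simp only: prod.insert[OF insert.hyps] sum.insert[OF insert.hyps] order_lin insert.IH)
qed


lemma part3:
  fixes M :: "real^'n^'n"
  assumes sym: "transpose M = M"
  shows "rank M = (\<Sum>l\<in>{l\<in>eigenvalues M. l \<noteq> 0}. order l (charpoly M))"
proof -
  obtain B where B: "pairwise orthogonal B" "\<forall>b\<in>B. norm b = 1" "span B = UNIV"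
    "independent B" "finite B" "card B = CARD('n)" "\<forall>b\<in>B. \<exists>c. M *v b = c *\<^sub>R b"
    using spectral[OF sym] by blast
  define d where "d b = (SOME c. M *v b = c *\<^sub>R b)" for b
  have ev: "M *v b = d b *\<^sub>R b" if "b \<in> B" for b
    using B(7) that unfolding d_def by (metis (mono_tags) someI_ex)
  have bb: "b \<bullet> b = 1" if "b \<in> B" for b using B(2) that by (simp add: norm_eq_1)
  have bb': "b \<bullet> b' = 0" if "b \<in> B" "b' \<in> B" "b \<noteq> b'" for b b'
    using B(1) that by (auto simp: pairwise_def orthogonal_def)
  obtain phi where phi: "bij_betw phi (UNIV::'n set) B"
    using finite_same_card_bij[of "UNIV::'n set" B] B(5,6) by auto
  have phiB: "phi i \<in> B" for i using phi by (auto simp: bij_betw_def)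
  have phiinj: "phi i = phi j \<longleftrightarrow> i = j" for i j using phi by (auto simp: bij_betw_def inj_on_def)
  define e where "e i = d (phi i)" for i
  have pp: "phi i \<bullet> phi j = (if i = j then 1 else 0)" for i j
  proof (cases "i = j")
    case True then show ?thesis using bb phiB by simp
  next
    case False then have "phi i \<noteq> phi j" using phiinj by blast
    then show ?thesis using bb' phiB False by simp
  qed
  have eigs: "eigenvalues M = range e"
  proof
    show "range e \<subseteq> eigenvalues M"
    proof
      fix l assume "l \<in> range e"
      then obtain i where "l = e i" by blast
      moreover have "phi i \<noteq> 0" using B(2) phiB[of i] by auto
      ultimately show "l \<in> eigenvalues M" unfolding eigenvalues_def e_def using ev[OF phiB[of i]] by blast
    qed
    show "eigenvalues M \<subseteq> range e"
    proof
      fix l assume "l \<in> eigenvalues M"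
      then obtain v where v: "v \<noteq> 0" "M *v v = l *\<^sub>R v" unfolding eigenvalues_def by blast
      have "\<exists>b\<in>B. b \<bullet> v \<noteq> 0"
      proof (rule ccontr)
        assume "\<not> ?thesis"
        then have "B \<subseteq> {y. y \<bullet> v = 0}" by auto
        moreover have "subspace {y. y \<bullet> v = 0}" by (auto simp: subspace_def inner_add_left)
        ultimately have "span B \<subseteq> {y. y \<bullet> v = 0}" by (rule span_minimal)
        then have "v \<bullet> v = 0" using B(3) by blast
        then show False using v(1) by simp
      qed
      then obtain b where b: "b \<in> B" "b \<bullet> v \<noteq> 0" by blast
      have "(M *v b) \<bullet> v = b \<bullet> (M *v v)" by (rule sym_dot[OF sym])
      then have "d b * (b \<bullet> v) = l * (b \<bullet> v)" using ev[OF b(1)] v(2) by simp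
      then have "l = d b" using b(2) by simp
      moreover obtain i where "b = phi i" using b(1) phi by (metis bij_betw_inv_into_right)
      ultimately show "l \<in> range e" by (simp add: e_def)
    qed
  qed
  define P where "P = {b\<in>B. d b \<noteq> 0}"
  have "range (\<lambda>x. M *v x) = span P"
  proof -
    have "range (\<lambda>x. M *v x) = (\<lambda>x. M *v x) ` span B" using B(3) by simp
    also have "\<dots> = span ((\<lambda>x. M *v x) ` B)" using span_linear_image[of "\<lambda>x. M *v x" B] by simp
    also have "\<dots> = span P"
    proof (unfold span_eq, intro conjI subsetI)
      fix y assume "y \<in> (\<lambda>x. M *v x) ` B"
      then obtain b where b: "b \<in> B" "y = d b *\<^sub>R b" using ev by auto
      show "y \<in> span P"
      proof (cases "d b = 0")
        case True then show ?thesis using b by (simp add: span_zero)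
      next
        case False then have "b \<in> P" using b by (simp add: P_def)
        then show ?thesis using b by (simp add: span_base span_scale)
      qed
    next
      fix b assume b: "b \<in> P"
      then have "b = (1 / d b) *\<^sub>R (M *v b)" using ev[of b] by (simp add: P_def)
      moreover have "M *v b \<in> (\<lambda>x. M *v x) ` B" using b by (simp add: P_def)
      ultimately show "b \<in> span ((\<lambda>x. M *v x) ` B)" by (metis span_base span_scale)
    qed
    finally show ?thesis .
  qed
  then have "rank M = dim (span P)" by (simp add: rank_dim_range)
  also have "\<dots> = card P"
    using dim_span[of P] dim_eq_card_independent[of P] independent_mono[OF B(4), of P]
    by (simp add: P_def)
  also have "P = phi ` {i. e i \<noteq> 0}"
    using phi unfolding P_def e_def bij_betw_def by auto
  also have "card \<dots> = card {i. e i \<noteq> 0}"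
    by (rule card_image) (simp add: inj_on_def phiinj)
  finally have rk: "rank M = card {i. e i \<noteq> 0}" .
  define PM :: "real^'n^'n" where "PM = (\<chi> i j. phi j $ i)"
  define Q where "Q = mp PM"
  have PTP: "transpose PM ** PM = mat 1"
  proof -
    have "(transpose PM ** PM) $ i $ j = phi i \<bullet> phi j" for i j
      by (simp add: PM_def matrix_matrix_mult_def transpose_def inner_vec_def)
    then show ?thesis by (simp add: vec_eq_iff mat_def pp)
  qed
  have PMP: "transpose PM ** (M ** PM) = (\<chi> i j. if i = j then e i else 0)"
  proof -
    have "(M ** PM) $ k $ j = (M *v phi j) $ k" for k j
      by (simp add: PM_def matrix_matrix_mult_def matrix_vector_mult_def)
    then have "(transpose PM ** (M ** PM)) $ i $ j = phi i \<bullet> (M *v phi j)" for i j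
      by (simp add: PM_def matrix_matrix_mult_def transpose_def inner_vec_def)
    then show ?thesis using ev phiB by (simp add: vec_eq_iff e_def pp)
  qed
  have QTQ: "transpose Q ** Q = mat 1"
    by (simp add: Q_def mp_transpose[symmetric] mp_mult[symmetric] PTP mp_one)
  define N where "N = mat [:0,1:] - mp M"
  have QNQ: "transpose Q ** N ** Q = mat [:0,1:] - mp (\<chi> i j. if i = j then e i else 0)"
  proof -
    have "transpose Q ** N ** Q = transpose Q ** mat [:0,1:] ** Q - transpose Q ** mp M ** Q"
      by (simp add: N_def mat_diff_ldistrib mat_diff_rdistrib)
    also have "transpose Q ** mat [:0,1:] ** Q = mat [:0,1:] ** (transpose Q ** Q)"
      by (simp add: mat_comm matrix_mul_assoc)
    also note QTQ
    also have "transpose Q ** mp M ** Q = mp (transpose PM ** (M ** PM))"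
      by (simp add: Q_def mp_transpose[symmetric] mp_mult matrix_mul_assoc)
    finally show ?thesis by (simp add: PMP)
  qed
  have "det (transpose Q ** N ** Q) = det N * (det (transpose Q) * det Q)"
    by (simp add: det_mul)
  also have "det (transpose Q) * det Q = 1"
    using det_mul[of "transpose Q" Q] QTQ by simp
  finally have "det N = det (mat [:0,1:] - mp (\<chi> i j. if i = j then e i else 0))"
    using QNQ by simp
  also have "\<dots> = (\<Prod>i\<in>UNIV. [:- e i, 1:])"
    by (subst det_diagonal) (auto simp: mat_def mp_def)
  finally have cp: "charpoly M = (\<Prod>i\<in>UNIV. [:- e i, 1:])"
    by (simp add: charpoly_alt N_def)
  have "(\<Sum>l\<in>{l\<in>eigenvalues M. l \<noteq> 0}. order l (charpoly M))
      = (\<Sum>l\<in>{l\<in>range e. l \<noteq> 0}. \<Sum>i\<in>UNIV. if l = e i then 1 else 0)"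
    by (simp add: eigs cp order_prod_lin)
  also have "\<dots> = (\<Sum>i\<in>UNIV. \<Sum>l\<in>{l\<in>range e. l \<noteq> 0}. if l = e i then 1 else 0)"
    by (rule sum.swap)
  also have "\<dots> = (\<Sum>i\<in>UNIV. if e i \<noteq> 0 then 1 else 0)"
    by (rule sum.cong) (auto simp: sum.delta')
  also have "\<dots> = card {i. e i \<noteq> 0}"
    by (simp add: sum.If_cases)
  finally show ?thesis using rk by simp
qed


lemma rank_ker:
  fixes M :: "real^'n^'n"
  assumes sym: "transpose M = M"
  shows "rank M + dim {x. M *v x = 0} = CARD('n)"
proof -
  have sub: "subspace (range (\<lambda>x. M *v x))"
    unfolding subspace_def
    by (metis (no_types, lifting) matrix_vector_mult_0_right matrix_vector_right_distrib matrix_vector_mult_scaleR rangeE rangeI)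
  have eq: "{y \<in> UNIV. \<forall>x \<in> range (\<lambda>x. M *v x). orthogonal x y} = {x. M *v x = 0}"
  proof (intro set_eqI iffI)
    fix y assume "y \<in> {y \<in> UNIV. \<forall>x \<in> range (\<lambda>x. M *v x). orthogonal x y}"
    then have "orthogonal (M *v (M *v y)) y" by blast
    then have "(M *v y) \<bullet> (M *v y) = 0" using sym_dot[OF sym, of "M *v y" y] by (simp add: orthogonal_def)
    then show "y \<in> {x. M *v x = 0}" by simp
  next
    fix y assume "y \<in> {x. M *v x = 0}"
    then show "y \<in> {y \<in> UNIV. \<forall>x \<in> range (\<lambda>x. M *v x). orthogonal x y}"
      using sym_dot[OF sym] by (auto simp: orthogonal_def)
  qed
  have "dim {y \<in> UNIV. \<forall>x \<in> range (\<lambda>x. M *v x). orthogonal x y} + dim (range (\<lambda>x. M *v x)) = dim (UNIV :: (real^'n) set)"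
    by (rule dim_subspace_orthogonal_to_vectors[OF sub subspace_UNIV]) simp
  then show ?thesis unfolding eq by (simp add: rank_dim_range)
qed

context
  fixes A B :: "'e::finite \<Rightarrow> ('v::finite) list \<Rightarrow> real"
  assumes fA: "\<And>e. fin_supp (A e)" and fB: "\<And>e. fin_supp (B e)"
begin

definition WW where "WW = (\<Union>e. {w. A e w \<noteq> 0} \<union> {w. B e w \<noteq> 0})"

lemma finWW: "finite WW"
  unfolding WW_def using fA fB by (auto simp: fin_supp_def)

lemma suppW: "w \<notin> WW \<Longrightarrow> (B e - A e) w = 0"
  by (auto simp: WW_def)

lemma tinnerW: "tinner (B e - A e) (B f - A f) = (\<Sum>w\<in>WW. (B e w - A e w) * (B f w - A f w))"
proof -
  have "tinner (B e - A e) (B f - A f) = (\<Sum>w\<in>{w. (B e - A e) w \<noteq> 0}. (B e - A e) w * (B f - A f) w)"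
    by (simp add: tinner_def)
  also have "\<dots> = (\<Sum>w\<in>WW. (B e - A e) w * (B f - A f) w)"
  proof (rule sum.mono_neutral_left[OF finWW])
    show "{w. (B e - A e) w \<noteq> 0} \<subseteq> WW" using suppW by blast
  qed simp
  finally show ?thesis by simp
qed

lemma gram_entry: "gramL A B $ e $ f = (\<Sum>w\<in>WW. (B e w - A e w) * (B f w - A f w))"
  by (simp add: gramL_def tinnerW)

lemma gram_sym: "transpose (gramL A B) = gramL A B"
  by (simp add: vec_eq_iff transpose_def gram_entry mult.commute)

lemma gram_mv: "(gramL A B *v x) $ e = (\<Sum>w\<in>WW. (B e w - A e w) * bdry A B x w)"
proof -
  have "(gramL A B *v x) $ e = (\<Sum>f\<in>UNIV. (\<Sum>w\<in>WW. (B e w - A e w) * (B f w - A f w)) * x $ f)"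
    by (simp add: matrix_vector_mult_def gram_entry)
  also have "\<dots> = (\<Sum>f\<in>UNIV. \<Sum>w\<in>WW. (B e w - A e w) * (x $ f * (B f w - A f w)))"
    by (simp add: sum_distrib_right sum_distrib_left mult_ac)
  also have "\<dots> = (\<Sum>w\<in>WW. \<Sum>f\<in>UNIV. (B e w - A e w) * (x $ f * (B f w - A f w)))"
    by (rule sum.swap)
  also have "\<dots> = (\<Sum>w\<in>WW. (B e w - A e w) * bdry A B x w)"
    by (simp add: bdry_def sum_distrib_left)
  finally show ?thesis .
qed

lemma ker_gram: "{x. gramL A B *v x = 0} = cycles A B"
proof (intro set_eqI iffI)
  fix x assume "x \<in> {x. gramL A B *v x = 0}"
  then have L0: "gramL A B *v x = 0" by simp
  have "0 = x \<bullet> (gramL A B *v x)" using L0 by simp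
  also have "\<dots> = (\<Sum>e\<in>UNIV. x $ e * (\<Sum>w\<in>WW. (B e w - A e w) * bdry A B x w))"
    by (simp add: inner_vec_def gram_mv)
  also have "\<dots> = (\<Sum>e\<in>UNIV. \<Sum>w\<in>WW. (x $ e * (B e w - A e w)) * bdry A B x w)"
    by (simp add: sum_distrib_left mult_ac)
  also have "\<dots> = (\<Sum>w\<in>WW. \<Sum>e\<in>UNIV. (x $ e * (B e w - A e w)) * bdry A B x w)"
    by (rule sum.swap)
  also have "\<dots> = (\<Sum>w\<in>WW. bdry A B x w * bdry A B x w)"
    by (simp add: sum_distrib_right bdry_def)
  finally have "(\<Sum>w\<in>WW. bdry A B x w * bdry A B x w) = 0" by simp
  then have "\<forall>w\<in>WW. bdry A B x w * bdry A B x w = 0"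
    using sum_nonneg_eq_0_iff[OF finWW] by (simp add: sum_nonneg_eq_0_iff[OF finWW])
  then have "bdry A B x w = 0" for w
  proof (cases "w \<in> WW")
    case False
    then show ?thesis using suppW[OF False] by (simp add: bdry_def)
  qed simp
  then show "x \<in> cycles A B" by (simp add: cycles_def fun_eq_iff)
next
  fix x assume "x \<in> cycles A B"
  then have "bdry A B x = 0" by (simp add: cycles_def)
  then show "x \<in> {x. gramL A B *v x = 0}" by (simp add: vec_eq_iff gram_mv)
qed

lemma part1: "int (rank (gramL A B)) = int CARD('e) - int (dim (cycles A B))"
  using rank_ker[OF gram_sym] ker_gram by simp

end

interpretation fs: vector_space "fscale :: real \<Rightarrow> ('a \<Rightarrow> real) \<Rightarrow> ('a \<Rightarrow> real)"
  by unfold_locales (auto simp: fscale_def fun_eq_iff algebra_simps)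

interpretation fsp: finite_dimensional_vector_space_pair_1
  "scaleR :: real \<Rightarrow> 'b::euclidean_space \<Rightarrow> 'b" Basis "fscale :: real \<Rightarrow> ('a \<Rightarrow> real) \<Rightarrow> ('a \<Rightarrow> real)"
  by unfold_locales

lemma sum_fun_apply: "(sum f S) x = (\<Sum>i\<in>S. f i x)" for f :: "'i \<Rightarrow> 'a \<Rightarrow> 'b::comm_monoid_add"
  by (induction S rule: infinite_finite_induct) simp_all

lemma rank_nullity_fs:
  fixes f :: "real^'n \<Rightarrow> ('a \<Rightarrow> real)"
  assumes add: "\<And>x y. f (x + y) = f x + f y" and sc: "\<And>c x. f (c *\<^sub>R x) = fscale c (f x)"
    and S: "subspace S" and KS: "{x. f x = 0} \<subseteq> S"
  shows "fs.dim (f ` S) + dim {x. f x = 0} = dim S"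
proof -
  define K where "K = {x. f x = 0}"
  have f0: "f 0 = 0"
  proof -
    have "f 0 = f 0 + f 0" using add[of 0 0] by simp
    then show ?thesis by simp
  qed
  have fdiff: "f (x - y) = f x - f y" for x y
  proof -
    have "f x = f (x - y) + f y" using add[of "x - y" y] by simp
    then show ?thesis by (simp add: eq_diff_eq)
  qed
  have lin: "Vector_Spaces.linear (*\<^sub>R) fscale f"
    unfolding Vector_Spaces.linear_iff using add sc
    by (auto intro: fs.vector_space_axioms real_vector.vector_space_axioms)
  have subK: "subspace K" unfolding K_def subspace_def
  proof (intro conjI ballI allI)
    show "0 \<in> {x. f x = 0}" using f0 by simp
    fix x y assume "x \<in> {x. f x = 0}" "y \<in> {x. f x = 0}"
    then show "x + y \<in> {x. f x = 0}" using add[of x y] by simp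
  next
    fix c x assume "x \<in> {x. f x = 0}"
    then show "c *\<^sub>R x \<in> {x. f x = 0}" using sc[of c x] by (simp add: fscale_def fun_eq_iff)
  qed
  define C where "C = S \<inter> {y. \<forall>x\<in>K. orthogonal x y}"
  have subC: "subspace C" unfolding C_def
    by (rule subspace_inter[OF S subspace_orthogonal_to_vectors])
  have dC: "dim C + dim K = dim S" unfolding C_def
    using dim_subspace_orthogonal_to_vectors[OF subK S KS[folded K_def]]
    by (simp only: Int_def mem_Collect_eq)
  have img: "f ` S = f ` C"
  proof
    show "f ` C \<subseteq> f ` S" by (auto simp: C_def)
    show "f ` S \<subseteq> f ` C"
    proof
      fix v assume "v \<in> f ` S"
      then obtain s where s: "s \<in> S" "v = f s" by blast
      obtain y z where yz: "y \<in> span K" "\<And>w. w \<in> span K \<Longrightarrow> orthogonal z w" "s = y + z"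
        using orthogonal_subspace_decomp_exists[of K s] by metis
      have spK: "span K = K" using subK by (simp only: span_eq_iff)
      have yK: "y \<in> K" using yz(1) unfolding spK .
      have "z = s - y" using yz(3) by simp
      then have zS: "z \<in> S" using s(1) yK KS S unfolding K_def by (auto intro: subspace_diff)
      have zC: "z \<in> C" unfolding C_def using zS yz(2) unfolding spK
        by (auto simp: orthogonal_commute)
      have "f s = f z" using yz(3) add[of y z] yK by (simp add: K_def)
      then show "v \<in> f ` C" using s zC by blast
    qed
  qed
  have inj: "inj_on f (span C)"
  proof -
    have spC: "span C = C" using subC by (simp only: span_eq_iff)
    moreover have "inj_on f C"
    proof (rule inj_onI)
      fix a b assume ab: "a \<in> C" "b \<in> C" "f a = f b"
      then have "a - b \<in> K" by (simp add: K_def fdiff)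
      moreover have "a - b \<in> C" using ab subC by (simp add: subspace_diff)
      ultimately have "orthogonal (a - b) (a - b)" by (auto simp: C_def)
      then show "a = b" by (simp add: orthogonal_def)
    qed
    then show ?thesis unfolding spC .
  qed
  have "fs.dim (f ` C) = dim C" using fsp.dim_image_eq[OF lin] inj by (simp add: span_raw_def dim_raw_def)
  then show ?thesis using img dC by (simp add: K_def)
qed


definition ind :: "'a \<Rightarrow> 'a \<Rightarrow> real" where "ind u = (\<lambda>t. if t = u then 1 else 0)"

lemma sum_ind_mult: "finite S \<Longrightarrow> a \<in> S \<Longrightarrow> (\<Sum>u\<in>S. (if u = a then 1 else 0) * g u) = (g a :: real)"
proof -
  assume "finite S" "a \<in> S"
  have "(\<Sum>u\<in>S. (if u = a then 1 else 0) * g u) = (\<Sum>u\<in>S. if u = a then g u else 0)"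
    by (rule sum.cong) auto
  then show ?thesis using \<open>finite S\<close> \<open>a \<in> S\<close> by simp
qed

context
  fixes A B :: "'e::finite \<Rightarrow> ('v::finite) list \<Rightarrow> real"
begin

definition "RR = (macro_edges A B \<union> (macro_edges A B)\<inverse>)\<^sup>*"

lemma finV: "finite (Vmacro A B)"
  by (simp add: Vmacro_def)

lemma ABV: "A e \<in> Vmacro A B" "B e \<in> Vmacro A B"
  by (auto simp: Vmacro_def)

lemma Bm_add: "Bmacro A B (x + y) = Bmacro A B x + Bmacro A B y"
  unfolding Bmacro_def by (rule ext) (simp add: distrib_right sum.distrib)

lemma Bm_scale: "Bmacro A B (c *\<^sub>R x) = fscale c (Bmacro A B x)"
  unfolding Bmacro_def fscale_def by (rule ext) (simp add: sum_distrib_left mult.assoc)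

lemma Bm_neg: "Bmacro A B (- x) = - Bmacro A B x"
  unfolding Bmacro_def by (rule ext) (simp add: sum_negf)

lemma Bm_zero: "Bmacro A B 0 = 0"
  unfolding Bmacro_def by (rule ext) simp

lemma bdry_phihat: "bdry A B x = phihat A B (Bmacro A B x)"
proof
  fix w
  have "phihat A B (Bmacro A B x) w
      = (\<Sum>u\<in>Vmacro A B. \<Sum>e\<in>UNIV. x $ e * (((if u = B e then 1 else 0) - (if u = A e then 1 else 0)) * u w))"
    by (simp add: phihat_def Bmacro_def sum_distrib_right mult.assoc)
  also have "\<dots> = (\<Sum>e\<in>UNIV. x $ e * (\<Sum>u\<in>Vmacro A B. ((if u = B e then 1 else 0) - (if u = A e then 1 else 0)) * u w))"
    by (subst sum.swap) (simp add: sum_distrib_left)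
  also have "\<dots> = (\<Sum>e\<in>UNIV. x $ e * (B e w - A e w))"
  proof (rule sum.cong[OF refl])
    fix e
    have "(\<Sum>u\<in>Vmacro A B. ((if u = B e then 1 else 0) - (if u = A e then 1 else 0)) * u w)
        = (\<Sum>u\<in>Vmacro A B. (if u = B e then 1 else 0) * u w) - (\<Sum>u\<in>Vmacro A B. (if u = A e then 1 else 0) * u w)"
      by (simp only: left_diff_distrib sum_subtractf)
    also have "\<dots> = B e w - A e w" using finV ABV by (simp only: sum_ind_mult)
    finally show "x $ e * (\<Sum>u\<in>Vmacro A B. ((if u = B e then 1 else 0) - (if u = A e then 1 else 0)) * u w) = x $ e * (B e w - A e w)"
      by simp
  qed
  finally show "bdry A B x w = phihat A B (Bmacro A B x) w" by (simp add: bdry_def)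
qed

lemma Bm_supp: "u \<notin> Vmacro A B \<Longrightarrow> Bmacro A B x u = 0"
  using ABV by (auto simp: Bmacro_def intro!: sum.neutral)

lemma range_ker: "range (Bmacro A B) \<inter> ker_phihat A B = Bmacro A B ` cycles A B"
  by (auto simp: ker_phihat_def cycles_def bdry_phihat Bm_supp)

lemma Bm_axis: "Bmacro A B (axis e 1) = ind (B e) - ind (A e)"
proof (rule ext)
  fix u
  have "Bmacro A B (axis e 1) u = (\<Sum>i\<in>UNIV. (if i = e then 1 else 0) *
        ((if u = B i then 1 else 0) - (if u = A i then 1 else 0)))"
    unfolding Bmacro_def axis_def by simp
  also have "\<dots> = (if u = B e then 1 else 0) - (if u = A e then 1 else 0)"
    by (rule sum_ind_mult) simp_all
  finally show "Bmacro A B (axis e 1) u = (ind (B e) - ind (A e)) u" by (simp add: ind_def)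
qed

lemma RR_range: "(a, b) \<in> RR \<Longrightarrow> ind b - ind a \<in> range (Bmacro A B)"
  unfolding RR_def
proof (induction rule: rtrancl_induct)
  case base
  then show ?case using Bm_zero by (metis diff_self rangeI)
next
  case (step b c)
  from step.hyps(2) obtain e where e: "(b = A e \<and> c = B e) \<or> (b = B e \<and> c = A e)"
    by (auto simp: macro_edges_def)
  have "ind c - ind b \<in> range (Bmacro A B)"
    using e Bm_axis[of e] Bm_neg[of "axis e 1"] by (metis minus_diff_eq rangeI)
  then obtain y where y: "ind c - ind b = Bmacro A B y" by blast
  obtain z where z: "ind b - ind a = Bmacro A B z" using step.IH by blast
  have "ind c - ind a = (ind c - ind b) + (ind b - ind a)" by (simp add: algebra_simps)
  then have "ind c - ind a = Bmacro A B y + Bmacro A B z" unfolding y z .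
  then have "ind c - ind a = Bmacro A B (y + z)" by (simp add: Bm_add)
  then show ?case by blast
qed

lemma RR_V: "(a, b) \<in> RR \<Longrightarrow> a \<in> Vmacro A B \<Longrightarrow> b \<in> Vmacro A B"
  unfolding RR_def
proof (induction rule: rtrancl_induct)
  case base then show ?case .
next
  case (step b c)
  then show ?case by (auto simp: macro_edges_def ABV)
qed

lemma equivRR: "equiv UNIV RR"
proof -
  have "refl RR" unfolding RR_def by (rule refl_rtrancl)
  moreover have "sym RR" unfolding RR_def
    by (rule sym_rtrancl) (auto simp: sym_def)
  moreover have "trans RR" unfolding RR_def by (rule trans_rtrancl)
  ultimately show ?thesis by (simp add: equiv_def)
qed

lemma edge_RR: "(A e, B e) \<in> RR"
  unfolding RR_def by (auto simp: macro_edges_def)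

end


context
  fixes A B :: "'e::finite \<Rightarrow> ('v::finite) list \<Rightarrow> real"
begin

definition "rt u = (SOME w. w \<in> RR A B `` {u})"

lemma rt_R: "(u, rt u) \<in> RR A B"
proof -
  have "u \<in> RR A B `` {u}" by (simp add: RR_def)
  then have "rt u \<in> RR A B `` {u}" unfolding rt_def by (rule someI[where P="\<lambda>w. w \<in> RR A B `` {u}"])
  then show ?thesis by simp
qed

lemma rt_eq: "(u, u') \<in> RR A B \<Longrightarrow> rt u = rt u'"
  unfolding rt_def using equiv_class_eq[OF equivRR] by metis

lemma rt_rt: "rt (rt u) = rt u"
  using rt_eq[OF rt_R[of u]] by simp

lemma rt_V: "u \<in> Vmacro A B \<Longrightarrow> rt u \<in> Vmacro A B"
  by (rule RR_V[OF rt_R])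

lemma card_roots: "card (rt ` Vmacro A B) = c_macro A B"
proof -
  have "bij_betw (\<lambda>w. RR A B `` {w}) (rt ` Vmacro A B) (Vmacro A B // RR A B)"
  proof (rule bij_betw_imageI)
    show "inj_on (\<lambda>w. RR A B `` {w}) (rt ` Vmacro A B)"
    proof (rule inj_onI)
      fix w1 w2 assume w: "w1 \<in> rt ` Vmacro A B" "w2 \<in> rt ` Vmacro A B" "RR A B `` {w1} = RR A B `` {w2}"
      then have "(w1, w2) \<in> RR A B" using eq_equiv_class_iff[OF equivRR] by blast
      then have "rt w1 = rt w2" by (rule rt_eq)
      then show "w1 = w2" using w(1,2) rt_rt by auto
    qed
    show "(\<lambda>w. RR A B `` {w}) ` rt ` Vmacro A B = Vmacro A B // RR A B"
    proof -
      have "RR A B `` {rt u} = RR A B `` {u}" for u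
        using equiv_class_eq[OF equivRR rt_R[of u]] by simp
      then show ?thesis unfolding quotient_def by auto
    qed
  qed
  then have "card (rt ` Vmacro A B) = card (Vmacro A B // RR A B)" by (rule bij_betw_same_card)
  then show ?thesis by (simp add: c_macro_def RR_def)
qed

definition "gg u = ind u - ind (rt u)"

lemma roots_sub: "rt ` Vmacro A B \<subseteq> Vmacro A B"
  using rt_V by blast

lemma gg_val: "u \<in> Vmacro A B - rt ` Vmacro A B \<Longrightarrow> u' \<in> Vmacro A B - rt ` Vmacro A B \<Longrightarrow>
   gg u u' = (if u' = u then 1 else 0)"
proof -
  assume u: "u \<in> Vmacro A B - rt ` Vmacro A B" and u': "u' \<in> Vmacro A B - rt ` Vmacro A B"
  have "u' \<noteq> rt u" using u u' by auto
  then show ?thesis by (simp add: gg_def ind_def)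
qed

lemma gg_inj: "inj_on gg (Vmacro A B - rt ` Vmacro A B)"
proof (rule inj_onI)
  fix u u' assume u: "u \<in> Vmacro A B - rt ` Vmacro A B" and u': "u' \<in> Vmacro A B - rt ` Vmacro A B"
    and eq: "gg u = gg u'"
  have "gg u' u' = 1" using gg_val[OF u' u'] by simp
  then have "gg u u' = 1" using eq by simp
  then show "u = u'" using gg_val[OF u u'] by (auto split: if_splits)
qed

lemma dim_range_Bm: "fs.dim (range (Bmacro A B)) = card (Vmacro A B) - c_macro A B"
proof -
  define V where "V = Vmacro A B"
  define Rt where "Rt = rt ` V"
  define Bs where "Bs = gg ` (V - Rt)"
  have finBs: "finite Bs" unfolding Bs_def V_def by (intro finite_imageI finite_Diff finV)
  have cardBs: "card Bs = card V - c_macro A B"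
  proof -
    have "card Bs = card (V - Rt)" unfolding Bs_def V_def Rt_def using gg_inj by (rule card_image)
    also have "\<dots> = card V - card Rt" unfolding V_def Rt_def
      by (rule card_Diff_subset) (use finV roots_sub in \<open>auto intro: finite_subset\<close>)
    finally show ?thesis unfolding Rt_def V_def using card_roots by simp
  qed
  have key: "f b = 0" if sum0: "(\<Sum>x\<in>Bs. fscale (f x) x) = 0" and b: "b \<in> Bs" for f :: "(('v list \<Rightarrow> real) \<Rightarrow> real) \<Rightarrow> real" and b
  proof -
    from b obtain u where u: "u \<in> V - Rt" "b = gg u" unfolding Bs_def by blast
    have "0 = (\<Sum>x\<in>Bs. fscale (f x) x) u" using sum0 by simp
    also have "\<dots> = (\<Sum>x\<in>Bs. f x * x u)" by (simp add: sum_fun_apply fscale_def)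
    also have "\<dots> = (\<Sum>u'\<in>V - Rt. f (gg u') * gg u' u)"
      unfolding Bs_def using gg_inj by (simp add: sum.reindex V_def Rt_def)
    also have "\<dots> = (\<Sum>u'\<in>V - Rt. (if u' = u then 1 else 0) * f (gg u'))"
      using u(1) gg_val by (intro sum.cong) (auto simp: V_def Rt_def)
    also have "\<dots> = f (gg u)"
      using u(1) finV by (intro sum_ind_mult) (auto simp: V_def)
    finally show "f b = 0" using u(2) by simp
  qed
  have indep: "fs.independent Bs"
    apply (rule fs.independent_if_scalars_zero[OF finBs])
    subgoal for f x using key[of f x] by blast
    done
  have subR: "fs.subspace (range (Bmacro A B))"
    unfolding fs.subspace_def
  proof (intro conjI ballI allI)
    show "0 \<in> range (Bmacro A B)" using Bm_zero[of A B] by (metis rangeI)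
  next
    fix y z assume "y \<in> range (Bmacro A B)" "z \<in> range (Bmacro A B)"
    then obtain a b where "y = Bmacro A B a" "z = Bmacro A B b" by blast
    then have "y + z = Bmacro A B (a + b)" by (simp add: Bm_add)
    then show "y + z \<in> range (Bmacro A B)" by blast
  next
    fix c y assume "y \<in> range (Bmacro A B)"
    then obtain a where "y = Bmacro A B a" by blast
    then have "fscale c y = Bmacro A B (c *\<^sub>R a)" by (simp add: Bm_scale)
    then show "fscale c y \<in> range (Bmacro A B)" by blast
  qed
  have Bs_sub: "Bs \<subseteq> range (Bmacro A B)"
  proof
    fix b assume "b \<in> Bs"
    then obtain u where b: "b = gg u" unfolding Bs_def by blast
    obtain x where x: "ind (rt u) - ind u = Bmacro A B x" using RR_range[OF rt_R[of u]] by blast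
    have "gg u = - (ind (rt u) - ind u)" by (simp add: gg_def)
    also have "\<dots> = - Bmacro A B x" unfolding x ..
    also have "\<dots> = Bmacro A B (- x)" by (simp add: Bm_neg)
    finally have "gg u = Bmacro A B (- x)" .
    then show "b \<in> range (Bmacro A B)" using b by blast
  qed
  have G: "gg u \<in> fs.span Bs" if "u \<in> V" for u
  proof (cases "u \<in> Rt")
    case True
    then obtain u0 where "u = rt u0" unfolding Rt_def by blast
    then have "rt u = u" using rt_rt by simp
    then have "gg u = 0" by (simp add: gg_def)
    then show ?thesis by (simp add: fs.span_zero)
  next
    case False
    then have "gg u \<in> Bs" using that unfolding Bs_def by blast
    then show ?thesis by (rule fs.span_base)
  qed
  have span_eq: "fs.span Bs = range (Bmacro A B)"
  proof
    show "fs.span Bs \<subseteq> range (Bmacro A B)"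
      using fs.span_minimal[OF Bs_sub subR] .
    show "range (Bmacro A B) \<subseteq> fs.span Bs"
    proof
      fix y assume "y \<in> range (Bmacro A B)"
      then obtain x where y: "y = Bmacro A B x" by blast
      have "Bmacro A B x = (\<Sum>e\<in>UNIV. fscale (x $ e) (gg (B e) - gg (A e)))"
      proof (rule ext)
        fix u
        have "rt (B e) = rt (A e)" for e using rt_eq[OF edge_RR] by simp
        then show "Bmacro A B x u = (\<Sum>e\<in>UNIV. fscale (x $ e) (gg (B e) - gg (A e))) u"
          by (simp add: Bmacro_def sum_fun_apply fscale_def gg_def ind_def)
      qed
      also have "\<dots> \<in> fs.span Bs"
        unfolding V_def using G[unfolded V_def]
        by (intro fs.span_sum fs.span_scale fs.span_diff G[unfolded V_def] ABV)
      finally show "y \<in> fs.span Bs" using y by simp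
    qed
  qed
  have "fs.dim (range (Bmacro A B)) = card Bs"
  proof (rule fs.dim_eq_card)
    have sp: "fs.span (range (Bmacro A B)) = range (Bmacro A B)"
      by (rule fs.span_eq_iff[THEN iffD2, OF subR])
    show "fs.span Bs = fs.span (range (Bmacro A B))" unfolding sp by (rule span_eq)
  qed (rule indep)
  then show ?thesis using cardBs by (simp add: V_def)
qed

end

lemma phihat_zero: "phihat A B 0 = 0"
  by (rule ext) (simp add: phihat_def)

lemma bdry_add: "bdry A B (x + y) = bdry A B x + bdry A B y"
  unfolding bdry_def by (rule ext) (simp add: distrib_right sum.distrib)

lemma bdry_scale: "bdry A B (c *\<^sub>R x) = (\<lambda>w. c * bdry A B x w)"
  unfolding bdry_def by (rule ext) (simp add: sum_distrib_left mult.assoc)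

lemma subspace_cycles: "subspace (cycles A B)"
  unfolding subspace_def cycles_def
proof (intro conjI ballI allI)
  show "0 \<in> {x. bdry A B x = 0}" by (simp add: bdry_def fun_eq_iff)
next
  fix x y assume "x \<in> {x. bdry A B x = 0}" "y \<in> {x. bdry A B x = 0}"
  then show "x + y \<in> {x. bdry A B x = 0}" by (simp add: bdry_add)
next
  fix c x assume "x \<in> {x. bdry A B x = 0}"
  then show "c *\<^sub>R x \<in> {x. bdry A B x = 0}" by (simp add: bdry_scale fun_eq_iff)
qed

lemma part2:
  fixes A B :: "'e::finite \<Rightarrow> ('v::finite) list \<Rightarrow> real"
  shows "int CARD('e) - int (dim (cycles A B))
        = int (card (Vmacro A B)) - int (c_macro A B) - int (delta A B)"
proof -
  have KZ: "{x. Bmacro A B x = 0} \<subseteq> cycles A B"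
    by (auto simp: cycles_def bdry_phihat phihat_zero)
  have r1: "fs.dim (Bmacro A B ` cycles A B) + dim {x. Bmacro A B x = 0} = dim (cycles A B)"
    by (rule rank_nullity_fs[OF Bm_add Bm_scale subspace_cycles KZ])
  have r2: "fs.dim (Bmacro A B ` UNIV) + dim {x. Bmacro A B x = 0} = dim (UNIV :: (real^'e) set)"
    by (rule rank_nullity_fs[OF Bm_add Bm_scale subspace_UNIV subset_UNIV])
  have dU: "dim (UNIV :: (real^'e) set) = CARD('e)" by simp
  have de: "delta A B = fs.dim (Bmacro A B ` cycles A B)"
    unfolding delta_def range_ker ..
  have cV: "c_macro A B \<le> card (Vmacro A B)"
  proof -
    have "card (rt A B ` Vmacro A B) \<le> card (Vmacro A B)" by (rule card_mono[OF finV roots_sub])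
    then show ?thesis using card_roots[of A B] by simp
  qed
  have dR: "fs.dim (range (Bmacro A B)) = card (Vmacro A B) - c_macro A B"
    by (rule dim_range_Bm)
  show ?thesis using r1 r2 dU de cV dR by simp
qed

theorem theorem6p5:
  fixes A B :: "'e::finite \<Rightarrow> ('v::finite) list \<Rightarrow> real"
  assumes "\<And>e. fin_supp (A e)" and "\<And>e. fin_supp (B e)"
  shows "int (rank (gramL A B)) = int CARD('e) - int (dim (cycles A B))
    \<and> int CARD('e) - int (dim (cycles A B))
        = int (card (Vmacro A B)) - int (c_macro A B) - int (delta A B)
    \<and> rank (gramL A B) = (\<Sum>l\<in>{l\<in>eigenvalues (gramL A B). l \<noteq> 0}. order l (charpoly (gramL A B)))"
proof -
  have g: "transpose (gramL A B) = gramL A B" by (rule gram_sym[of A B, OF assms(1) assms(2)])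
  show ?thesis using part1[of A B, OF assms(1) assms(2)] part2[of A B] part3[OF g] by blast
qed


end
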